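(* Let $n\ge1$ and let $(A_1,A_2,A_3,A_4)$ be distinct nonempty subsets of $[n]$ with $\chi_{A_1}+\chi_{A_3}=\chi_{A_2}+\chi_{A_4}$ and $A_i\cap A_j\ne\emptyset$ for $1\le i<j\le 3$, where $A_4$ is the largest of the four in the binary order. Define $M=\bigcap_{i=1}^4A_i$ and $S_i=(A_i\cap A_{i+1})\setminus M$ for $1\le i\le 4$ (indices mod 4). Then $(S_1,S_2,S_3,S_4,M)$ is a side-midpoint tuple, i.e.: (S1) $S_i\cap S_j=\emptyset$ for all $i\ne j$; (S2) $M\cap S_i=\emptyset$ for all $i$; (S3) $M\ne\emptyset$; (S4) of each pair of opposite sides $\{S_1,S_3\}$, $\{S_2,S_4\}$, at most one is empty.
   Context: $\chi_A\in\{0,1\}^n$ denotes the characteristic vector of $A\subseteq[n]$. Binary order: a subset $I\subseteq[n]$ is encoded by $\sum_{j\in I}2^j$ and subsets are linearly ordered by this number. Indices of $A_i$ and $S_i$ are taken cyclically mod 4 ($A_5=A_1$, $S_0=S_4$). A side-midpoint tuple in $[n]$ is a tuple $(S_1,S_2,S_3,S_4,M)$ of subsets of $[n]$ satisfying (S1)–(S4). *)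

theory Defs
  imports Main
begin

definition ground :: "nat \<Rightarrow> nat set" where
  "ground n = {1..n}"

definition chi :: "nat set \<Rightarrow> nat \<Rightarrow> nat" where
  "chi A j = (if j \<in> A then 1 else 0)"

definition bin_code :: "nat set \<Rightarrow> nat" where
  "bin_code I = (\<Sum>j\<in>I. 2 ^ j)"

definition side_midpoint_tuple ::
  "nat \<Rightarrow> nat set \<Rightarrow> nat set \<Rightarrow> nat set \<Rightarrow> nat set \<Rightarrow> nat set \<Rightarrow> bool" where
  "side_midpoint_tuple n S1 S2 S3 S4 M \<longleftrightarrow>
     (let S = (\<lambda>i::nat. if i = 1 then S1 else if i = 2 then S2 else if i = 3 then S3 else S4) in
       (\<forall>i\<in>{1..4}. S i \<subseteq> ground n) \<and> M \<subseteq> ground n \<and>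
       (\<forall>i\<in>{1..4}. \<forall>j\<in>{1..4}. i \<noteq> j \<longrightarrow> S i \<inter> S j = {}) \<and>
       (\<forall>i\<in>{1..4}. M \<inter> S i = {}) \<and>
       M \<noteq> {} \<and>
       \<not> (S1 = {} \<and> S3 = {}) \<and> \<not> (S2 = {} \<and> S4 = {}))"

end

theory Submission
  imports Defs
begin

theorem proposition7p6:
  fixes n :: nat and A1 A2 A3 A4 :: "nat set"
  assumes "n \<ge> 1"
    and "A1 \<subseteq> ground n" "A2 \<subseteq> ground n" "A3 \<subseteq> ground n" "A4 \<subseteq> ground n"
    and "A1 \<noteq> {}" "A2 \<noteq> {}" "A3 \<noteq> {}" "A4 \<noteq> {}"
    and "distinct [A1, A2, A3, A4]"
    and "\<forall>j\<in>ground n. chi A1 j + chi A3 j = chi A2 j + chi A4 j"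
    and "A1 \<inter> A2 \<noteq> {}" "A1 \<inter> A3 \<noteq> {}" "A2 \<inter> A3 \<noteq> {}"
    and "bin_code A1 \<le> bin_code A4" "bin_code A2 \<le> bin_code A4" "bin_code A3 \<le> bin_code A4"
  shows "side_midpoint_tuple n
           ((A1 \<inter> A2) - (A1 \<inter> A2 \<inter> A3 \<inter> A4))
           ((A2 \<inter> A3) - (A1 \<inter> A2 \<inter> A3 \<inter> A4))
           ((A3 \<inter> A4) - (A1 \<inter> A2 \<inter> A3 \<inter> A4))
           ((A4 \<inter> A1) - (A1 \<inter> A2 \<inter> A3 \<inter> A4))
           (A1 \<inter> A2 \<inter> A3 \<inter> A4)"
proof -
  note a = assms
  have P: "\<And>j. (j \<in> A1 \<and> j \<in> A3 \<longleftrightarrow> j \<in> A2 \<and> j \<in> A4) \<and>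
               (j \<in> A1 \<and> j \<notin> A3 \<longrightarrow> (j \<in> A2 \<longleftrightarrow> j \<notin> A4)) \<and>
               (j \<in> A3 \<and> j \<notin> A1 \<longrightarrow> (j \<in> A2 \<longleftrightarrow> j \<notin> A4)) \<and>
               (j \<notin> A1 \<and> j \<notin> A3 \<longrightarrow> j \<notin> A2 \<and> j \<notin> A4)"
  proof -
    fix j
    show "?thesis j"
    proof (cases "j \<in> ground n")
      case True
      with a(11) have "chi A1 j + chi A3 j = chi A2 j + chi A4 j" by blast
      then show ?thesis by (auto simp: chi_def split: if_splits)
    next
      case False
      with a(2-5) show ?thesis by blast
    qed
  qed
  have d: "A1 \<noteq> A2" "A2 \<noteq> A3" using a(10) by auto
  have M: "A1 \<inter> A2 \<inter> A3 \<inter> A4 \<noteq> {}" using a(13) P by blast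
  have o1: "\<not> (A1 \<inter> A2 - A1 \<inter> A2 \<inter> A3 \<inter> A4 = {} \<and> A3 \<inter> A4 - A1 \<inter> A2 \<inter> A3 \<inter> A4 = {})"
  proof
    assume h: "A1 \<inter> A2 - A1 \<inter> A2 \<inter> A3 \<inter> A4 = {} \<and> A3 \<inter> A4 - A1 \<inter> A2 \<inter> A3 \<inter> A4 = {}"
    have "A2 = A3"
    proof (rule set_eqI)
      fix x show "x \<in> A2 \<longleftrightarrow> x \<in> A3" using P[of x] h by blast
    qed
    with d show False by simp
  qed
  have o2: "\<not> (A2 \<inter> A3 - A1 \<inter> A2 \<inter> A3 \<inter> A4 = {} \<and> A4 \<inter> A1 - A1 \<inter> A2 \<inter> A3 \<inter> A4 = {})"
  proof
    assume h: "A2 \<inter> A3 - A1 \<inter> A2 \<inter> A3 \<inter> A4 = {} \<and> A4 \<inter> A1 - A1 \<inter> A2 \<inter> A3 \<inter> A4 = {}"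
    have "A1 = A2"
    proof (rule set_eqI)
      fix x show "x \<in> A1 \<longleftrightarrow> x \<in> A2" using P[of x] h by blast
    qed
    with d show False by simp
  qed
  have dis: "\<forall>i\<in>{1..4::nat}. \<forall>j\<in>{1..4}. i \<noteq> j \<longrightarrow>
     (if i = 1 then A1 \<inter> A2 - A1 \<inter> A2 \<inter> A3 \<inter> A4 else if i = 2 then A2 \<inter> A3 - A1 \<inter> A2 \<inter> A3 \<inter> A4 else if i = 3 then A3 \<inter> A4 - A1 \<inter> A2 \<inter> A3 \<inter> A4 else A4 \<inter> A1 - A1 \<inter> A2 \<inter> A3 \<inter> A4) \<inter>
     (if j = 1 then A1 \<inter> A2 - A1 \<inter> A2 \<inter> A3 \<inter> A4 else if j = 2 then A2 \<inter> A3 - A1 \<inter> A2 \<inter> A3 \<inter> A4 else if j = 3 then A3 \<inter> A4 - A1 \<inter> A2 \<inter> A3 \<inter> A4 else A4 \<inter> A1 - A1 \<inter> A2 \<inter> A3 \<inter> A4) = {}"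
  proof -
    have e: "{1..4::nat} = {1,2,3,4}" by auto
    show ?thesis unfolding e using P by auto
  qed
  show ?thesis unfolding side_midpoint_tuple_def Let_def
    using dis M o1 o2 a(2-5) by auto
qed

end
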